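(* Let $\{F_b\}$ be a finite POVM on $\mathbb{C}^d$, let $\mathcal{F}$ be the trace-preserving operation $\mathcal{F}(\rho)=\sum_b F_b^{1/2}\rho F_b^{1/2}$, and let $\mathcal{A}(\rho)=\sum_{b,i}A_{bi}\rho A_{bi}^\dagger$ be any operation with $\sum_iA_{bi}^\dagger A_{bi}=F_b$ for each $b$. Then $$F_e(I/d,\mathcal{A})\le F_e(I/d,\mathcal{F}).$$
   Context: A POVM is a finite family of positive semidefinite operators $F_b$ with $\sum_bF_b=I$. For an operation $\mathcal{A}(\rho)=\sum_kA_k\rho A_k^\dagger$ and density operator $\rho$, the entanglement fidelity is $F_e(\rho,\mathcal{A})=\sum_k|\mathrm{tr}(A_k\rho)|^2$. *)

theory Defs
  imports "HOL-Analysis.Analysis"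
begin

(* Operators on C^d are represented as complex d x d matrices, d = CARD('n). *)
type_synonym 'n cmat = "complex ^ 'n ^ 'n"

definition mtrace :: "'n::finite cmat \<Rightarrow> complex" where
  "mtrace A = (\<Sum>i\<in>UNIV. A $ i $ i)"

definition adjoint_mat :: "'n::finite cmat \<Rightarrow> 'n cmat" where
  "adjoint_mat A = (\<chi> i j. cnj (A $ j $ i))"

definition quad_form :: "'n::finite cmat \<Rightarrow> complex ^ 'n \<Rightarrow> complex" where
  "quad_form A v = (\<Sum>i\<in>UNIV. cnj (v $ i) * (A *v v) $ i)"

definition psd :: "'n::finite cmat \<Rightarrow> bool" where
  "psd A \<longleftrightarrow> (\<forall>v. Im (quad_form A v) = 0 \<and> Re (quad_form A v) \<ge> 0)"

definition psd_sqrt :: "'n::finite cmat \<Rightarrow> 'n cmat" where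
  "psd_sqrt F = (THE S. psd S \<and> S ** S = F)"

definition is_povm :: "'b set \<Rightarrow> ('b \<Rightarrow> 'n::finite cmat) \<Rightarrow> bool" where
  "is_povm B F \<longleftrightarrow> finite B \<and> (\<forall>b\<in>B. psd (F b)) \<and> (\<Sum>b\<in>B. F b) = mat 1"

(* entanglement fidelity of the operation with Kraus operators K k, k \<in> S:
   F_e(rho, A) = sum_k |tr(A_k rho)|^2 *)
definition ent_fid :: "'n::finite cmat \<Rightarrow> ('k \<Rightarrow> 'n cmat) \<Rightarrow> 'k set \<Rightarrow> real" where
  "ent_fid \<rho> K S = (\<Sum>k\<in>S. (cmod (mtrace (K k ** \<rho>)))^2)"

definition max_mixed :: "'n::finite cmat" where
  "max_mixed = mat (1 / of_nat CARD('n))"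

end

theory Submission
  imports Defs "HOL-Analysis.Analysis"
begin


definition cinner :: "complex ^ 'n::finite \<Rightarrow> complex ^ 'n \<Rightarrow> complex" where
  "cinner x y = (\<Sum>i\<in>UNIV. cnj (x $ i) * y $ i)"

lemma cinner_add_right: "cinner x (y + z) = cinner x y + cinner x z"
  by (simp add: cinner_def distrib_left sum.distrib)
lemma cinner_add_left: "cinner (x + y) z = cinner x z + cinner y z"
  by (simp add: cinner_def distrib_right sum.distrib)
lemma cinner_diff_right: "cinner x (y - z) = cinner x y - cinner x z"
  by (simp add: cinner_def right_diff_distrib sum_subtractf)
lemma cinner_diff_left: "cinner (x - y) z = cinner x z - cinner y z"
  by (simp add: cinner_def left_diff_distrib sum_subtractf)
lemma cinner_scale_right: "cinner x (c *s y) = c * cinner x y"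
  by (simp add: cinner_def sum_distrib_left mult_ac)
lemma cinner_scale_left: "cinner (c *s x) y = cnj c * cinner x y"
  by (simp add: cinner_def sum_distrib_left mult_ac)
lemma cinner_zero_right[simp]: "cinner x 0 = 0" by (simp add: cinner_def)
lemma cinner_zero_left[simp]: "cinner 0 x = 0" by (simp add: cinner_def)
lemma cinner_sum_right: "cinner x (sum f S) = (\<Sum>s\<in>S. cinner x (f s))"
  by (induction S rule: infinite_finite_induct) (auto simp: cinner_add_right)
lemma cinner_sum_left: "cinner (sum f S) y = (\<Sum>s\<in>S. cinner (f s) y)"
  by (induction S rule: infinite_finite_induct) (auto simp: cinner_add_left)
lemma cinner_commute: "cinner y x = cnj (cinner x y)"
  by (simp add: cinner_def mult.commute)
lemma Re_cinner: "Re (cinner x y) = inner x y"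
  by (simp add: cinner_def inner_vec_def inner_complex_def Re_sum)
lemma cinner_self: "cinner x x = of_real ((norm x)^2)"
proof -
  have "cinner x x = (\<Sum>i\<in>UNIV. of_real ((cmod (x$i))^2))"
    unfolding cinner_def by (intro sum.cong refl) (simp add: complex_norm_square[symmetric] mult.commute)
  also have "\<dots> = of_real (\<Sum>i\<in>UNIV. (cmod (x$i))^2)" by simp
  also have "(\<Sum>i\<in>UNIV. (cmod (x$i))^2) = (norm x)^2"
    by (simp add: norm_vec_def L2_set_def sum_nonneg)
  finally show ?thesis .
qed
lemma Re_cinner_self: "Re (cinner x x) = (norm x)^2"
  by (simp add: cinner_self)
lemma cinner_self_eq_0: "cinner x x = 0 \<longleftrightarrow> x = 0"
  by (simp add: cinner_self)

lemma cinner_adjoint: "cinner x (A *v y) = cinner (adjoint_mat A *v x) y"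
  by (simp add: cinner_def adjoint_mat_def matrix_vector_mult_def sum_distrib_left
      sum_distrib_right mult_ac) (rule sum.swap)

lemma mat_scale: "(A::complex^'n::finite^'m::finite) *v (c *s x) = c *s (A *v x)"
  by (simp add: matrix_vector_mult_def vec_eq_iff sum_distrib_left mult_ac vector_scalar_mult_def)

lemma mat_sum: "(A::complex^'n::finite^'m::finite) *v (sum f S) = (\<Sum>s\<in>S. A *v f s)"
  by (induction S rule: infinite_finite_induct) (auto simp: matrix_vector_right_distrib)

lemma quad_form_cinner: "quad_form A v = cinner v (A *v v)"
  by (simp add: quad_form_def cinner_def)

lemma quad_expand: "cinner (x + y) (A *v (x + y)) =
   cinner x (A *v x) + cinner y (A *v y) + cinner x (A *v y) + cinner y (A *v x)"
  by (simp add: matrix_vector_right_distrib cinner_add_left cinner_add_right)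

lemma psd_herm:
  assumes "psd A"
  shows "cinner x (A *v y) = cinner (A *v x) y"
proof -
  have im: "Im (cinner z (A *v z)) = 0" for z
    using assms by (simp add: psd_def quad_form_cinner)
  have 1: "Im (cinner x (A *v y) + cinner y (A *v x)) = 0"
    using im[of "x+y"] im[of x] im[of y] unfolding quad_expand by simp
  have "Im (cinner x (A *v (\<i> *s y)) + cinner (\<i> *s y) (A *v x)) = 0"
    using im[of "x+ \<i> *s y"] im[of x] im[of "\<i> *s y"] unfolding quad_expand by simp
  hence 2: "Re (cinner x (A *v y) - cinner y (A *v x)) = 0"
    by (simp add: mat_scale cinner_scale_right cinner_scale_left)
  have "cinner x (A *v y) = cnj (cinner y (A *v x))"
    using 1 2 by (simp add: complex_eq_iff)
  thus ?thesis by (metis cinner_commute)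
qed

lemma quad_ineq:
  fixes a b :: real
  assumes "\<And>t. 2*t*a + t^2*b \<le> 0"
  shows "a = 0"
proof (rule ccontr)
  assume "a \<noteq> 0"
  define t where "t = a / (\<bar>b\<bar> + 1)"
  have pos: "\<bar>b\<bar> + 1 > 0" by simp
  have gen: "2*(a/c)*a + (a/c)^2*b = a^2 * (2*c + b) / c^2" if "c > 0" for c
    using that by (simp add: field_simps power2_eq_square)
  have "2*t*a + t^2*b = a^2 * (2*(\<bar>b\<bar>+1) + b) / (\<bar>b\<bar>+1)^2"
    unfolding t_def using gen[OF pos] .
  also have "\<dots> > 0"
  proof (intro divide_pos_pos mult_pos_pos)
    show "0 < a^2" using \<open>a \<noteq> 0\<close> by simp
    show "0 < 2 * (\<bar>b\<bar> + 1) + b" by (cases "b \<ge> 0") auto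
    show "0 < (\<bar>b\<bar> + 1)^2" using pos by simp
  qed
  finally show False using assms[of t] by simp
qed

lemma psd_Re_nonneg: "psd A \<Longrightarrow> Re (cinner x (A *v x)) \<ge> 0"
  by (simp add: psd_def quad_form_cinner)
lemma psd_Im: "psd A \<Longrightarrow> Im (cinner x (A *v x)) = 0"
  by (simp add: psd_def quad_form_cinner)

lemma psd_zero:
  assumes "psd A" "cinner w (A *v w) = 0"
  shows "A *v w = 0"
proof -
  let ?u = "A *v w"
  have "Re (cinner w ?u) = 0" using assms by simp
  have "2*t*Re (cinner ?u (A *v w)) + t^2 * Re (cinner ?u (A *v ?u)) \<ge> 0" for t :: real
  proof -
    have "0 \<le> Re (cinner (w + of_real t *s ?u) (A *v (w + of_real t *s ?u)))"
      using psd_Re_nonneg[OF assms(1)] by blast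
    also have "\<dots> = Re (cinner w (A *v w)) + t^2 * Re (cinner ?u (A *v ?u))
        + t * Re (cinner w (A *v ?u)) + t * Re (cinner ?u (A *v w))"
      unfolding quad_expand by (simp add: mat_scale cinner_scale_right cinner_scale_left power2_eq_square)
    also have "Re (cinner w (A *v ?u)) = Re (cinner ?u (A *v w))"
      using psd_herm[OF assms(1), of w ?u] by simp
    finally show ?thesis using assms(2) by simp
  qed
  hence "2*t*(- Re (cinner ?u (A *v w))) + t^2 * (- Re (cinner ?u (A *v ?u))) \<le> 0" for t :: real
    by (smt (verit) mult_minus_right)
  hence "- Re (cinner ?u (A *v w)) = 0" by (rule quad_ineq)
  hence "Re (cinner ?u (A *v w)) = 0" by simp
  hence "(norm ?u)^2 = 0" by (simp add: cinner_self)
  thus ?thesis by simp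
qed



lemma scaleR_cs: "(c::real) *\<^sub>R (x::complex^'n::finite) = complex_of_real c *s x"
  by (simp add: vec_eq_iff vector_scalar_mult_def) (simp add: scaleR_conv_of_real)

definition eig_basis :: "'n::finite cmat \<Rightarrow> (complex^'n) set \<Rightarrow> (complex^'n) set \<Rightarrow> bool" where
  "eig_basis F W E \<longleftrightarrow> finite E \<and> E \<subseteq> W \<and>
     (\<forall>e\<in>E. cinner e e = 1 \<and> F *v e = complex_of_real (Re (cinner e (F *v e))) *s e) \<and>
     (\<forall>e\<in>E. \<forall>f\<in>E. e \<noteq> f \<longrightarrow> cinner e f = 0) \<and>
     (\<forall>w\<in>W. w = (\<Sum>e\<in>E. cinner e w *s e))"

lemma cont_quad: "continuous_on S (\<lambda>x. Re (cinner x ((F::'n::finite cmat) *v x)))"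
proof -
  have "bounded_linear (\<lambda>x::complex^'n. F *v x)"
    using matrix_vector_mul_linear linear_conv_bounded_linear by blast
  hence "continuous_on S (\<lambda>x::complex^'n. F *v x)" by (rule linear_continuous_on)
  thus ?thesis unfolding Re_cinner by (intro continuous_intros)
qed

lemma max_eigvec:
  fixes F :: "'n::finite cmat"
  assumes H: "\<And>x y. cinner x (F *v y) = cinner (F *v x) y"
    and W: "subspace W" "\<forall>x\<in>W. F *v x \<in> W" and ne: "\<not> W \<subseteq> {0}"
  shows "\<exists>v\<in>W. norm v = 1 \<and> F *v v = complex_of_real (Re (cinner v (F *v v))) *s v"
proof -
  let ?f = "\<lambda>x. Re (cinner x (F *v x))"
  let ?K = "W \<inter> sphere 0 1"
  have cK: "compact ?K"
    by (intro closed_Int_compact compact_sphere closed_subspace W)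
  obtain w0 where w0: "w0 \<in> W" "w0 \<noteq> 0" using ne by auto
  have "(1 / norm w0) *\<^sub>R w0 \<in> ?K" using w0 W(1) by (simp add: subspace_scale)
  hence neK: "?K \<noteq> {}" by blast
  obtain v where v: "v \<in> ?K" and vmax: "\<forall>y\<in>?K. ?f y \<le> ?f v"
    using continuous_attains_sup[OF cK neK cont_quad] by blast
  define M where "M = ?f v"
  have nv: "norm v = 1" "v \<in> W" using v by auto
  have vv: "cinner v v = 1" using nv by (simp add: cinner_self)
  have fscale: "?f (c *\<^sub>R x) = c^2 * ?f x" for c x
    by (simp add: scaleR_cs mat_scale cinner_scale_left cinner_scale_right power2_eq_square)
  have bound: "?f x \<le> M * (norm x)^2" if "x \<in> W" for x
  proof (cases "x = 0")
    case True thus ?thesis by simp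
  next
    case False
    have "(1 / norm x) *\<^sub>R x \<in> ?K" using that False W(1) by (simp add: subspace_scale)
    hence "?f ((1 / norm x) *\<^sub>R x) \<le> M" using vmax M_def by blast
    hence "(1/norm x)^2 * ?f x \<le> M" by (simp only: fscale)
    thus ?thesis using False by (simp add: field_simps power2_eq_square)
  qed
  define u where "u = F *v v - M *\<^sub>R v"
  have uW: "u \<in> W" unfolding u_def using W nv by (simp add: subspace_diff subspace_scale)
  have "2*t*(Re (cinner u (F *v v)) - M * Re (cinner u v)) + t^2 * (?f u - M * (norm u)^2) \<le> 0"
    for t :: real
  proof -
    have xW: "v + t *\<^sub>R u \<in> W" using uW nv W by (simp add: subspace_add subspace_scale)
    have "?f (v + t *\<^sub>R u) = M + t^2 * ?f u + t * Re (cinner v (F *v u)) + t * Re (cinner u (F *v v))"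
      unfolding quad_expand M_def
      by (simp add: scaleR_cs mat_scale cinner_scale_left cinner_scale_right power2_eq_square)
    also have "Re (cinner v (F *v u)) = Re (cinner u (F *v v))"
      using H[of v u] cinner_commute[of "F *v v" u] by simp
    finally have e1: "?f (v + t *\<^sub>R u) = M + t^2 * ?f u + 2 * t * Re (cinner u (F *v v))" by simp
    have "(norm (v + t *\<^sub>R u))^2 = Re (cinner (v + t *\<^sub>R u) (v + t *\<^sub>R u))"
      by (simp add: cinner_self)
    also have "\<dots> = 1 + t^2 * (norm u)^2 + t * Re (cinner v u) + t * Re (cinner u v)"
      by (simp add: scaleR_cs cinner_add_left cinner_add_right cinner_scale_left
          cinner_scale_right vv power2_eq_square Re_cinner_self algebra_simps)
    also have "Re (cinner v u) = Re (cinner u v)"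
      using cinner_commute[of v u] by simp
    finally have e2: "(norm (v + t *\<^sub>R u))^2 = 1 + t^2 * (norm u)^2 + 2 * t * Re (cinner u v)" by simp
    have "?f (v + t *\<^sub>R u) \<le> M * (norm (v + t *\<^sub>R u))^2" using bound[OF xW] .
    thus ?thesis unfolding e1 e2 by (simp add: algebra_simps)
  qed
  hence "Re (cinner u (F *v v)) - M * Re (cinner u v) = 0" by (rule quad_ineq)
  hence "Re (cinner u u) = 0"
    unfolding u_def by (simp add: cinner_diff_right scaleR_cs cinner_scale_right)
  hence "u = 0" by (simp add: cinner_self)
  hence "F *v v = complex_of_real M *s v" unfolding u_def by (simp add: scaleR_cs)
  thus ?thesis using nv M_def by blast
qed

lemma spectral_aux:
  fixes F :: "'n::finite cmat"
  assumes H: "\<And>x y. cinner x (F *v y) = cinner (F *v x) y"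
  shows "subspace W \<Longrightarrow> (\<forall>x\<in>W. \<forall>c. c *s x \<in> W) \<Longrightarrow> (\<forall>x\<in>W. F *v x \<in> W)
     \<Longrightarrow> \<exists>E. eig_basis F W E"
proof (induction "dim W" arbitrary: W rule: less_induct)
  case less
  show ?case
  proof (cases "W \<subseteq> {0}")
    case True
    hence "eig_basis F W {}" unfolding eig_basis_def by auto
    thus ?thesis by blast
  next
    case False
    obtain v where v: "v \<in> W" "norm v = 1"
      and ev: "F *v v = complex_of_real (Re (cinner v (F *v v))) *s v"
      using max_eigvec[OF H less.prems(1) less.prems(3) False] by blast
    define M where "M = Re (cinner v (F *v v))"
    have vv: "cinner v v = 1" using v by (simp add: cinner_self)
    define W' where "W' = {x\<in>W. cinner v x = 0}"
    have sW': "subspace W'"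
      unfolding subspace_def W'_def using less.prems(1)
      by (auto simp: subspace_def scaleR_cs cinner_scale_right cinner_add_right)
    have cW': "\<forall>x\<in>W'. \<forall>c. c *s x \<in> W'"
      unfolding W'_def using less.prems(2) by (auto simp: cinner_scale_right)
    have iW': "\<forall>x\<in>W'. F *v x \<in> W'"
    proof
      fix x assume x: "x \<in> W'"
      have "cinner v (F *v x) = cinner (F *v v) x" by (rule H)
      also have "\<dots> = 0" using x unfolding W'_def
        by (subst ev) (simp add: cinner_scale_left)
      finally show "F *v x \<in> W'" using x less.prems(3) unfolding W'_def by auto
    qed
    have "v \<notin> W'" using vv unfolding W'_def by auto
    hence "W' \<subset> W" using v unfolding W'_def by auto
    hence "dim W' < dim W"
    proof -
      have sp: "span W' = W'" "span W = W" using sW' less.prems(1) by (simp_all add: span_eq_iff)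
      show ?thesis by (rule dim_psubset) (simp only: sp, rule \<open>W' \<subset> W\<close>)
    qed
    then obtain E' where E': "eig_basis F W' E'"
      using less.hyps[OF _ sW' cW' iW'] by blast
    have vE': "v \<notin> E'" using E' vv unfolding eig_basis_def W'_def by auto
    have "eig_basis F W (insert v E')"
      unfolding eig_basis_def
    proof (intro conjI ballI impI)
      show "finite (insert v E')" using E' unfolding eig_basis_def by auto
      show "insert v E' \<subseteq> W" using E' v unfolding eig_basis_def W'_def by auto
      fix e assume e: "e \<in> insert v E'"
      thus "cinner e e = 1" using E' vv unfolding eig_basis_def by auto
      show "F *v e = complex_of_real (Re (cinner e (F *v e))) *s e"
        using e E' ev unfolding eig_basis_def by auto
      fix f assume f: "f \<in> insert v E'" and ef: "e \<noteq> f"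
      show "cinner e f = 0"
      proof -
        { fix a b assume "a = v" "b \<in> E'"
          hence "cinner a b = 0" "cinner b a = 0"
            using E' unfolding eig_basis_def W'_def
            by (auto simp: cinner_commute[of v b]) }
        thus ?thesis using e f ef E' unfolding eig_basis_def by blast
      qed
    next
      fix w assume w: "w \<in> W"
      define w' where "w' = w - cinner v w *s v"
      have w'W: "w' \<in> W'" unfolding w'_def W'_def
        using w v less.prems
        by (auto simp: subspace_diff cinner_diff_right cinner_scale_right vv)
      have "w' = (\<Sum>e\<in>E'. cinner e w' *s e)" using E' w'W unfolding eig_basis_def by blast
      also have "\<dots> = (\<Sum>e\<in>E'. cinner e w *s e)"
      proof (intro sum.cong refl)
        fix e assume "e \<in> E'"
        hence "cinner e v = 0" using E' unfolding eig_basis_def W'_def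
          by (auto simp: cinner_commute[of e v])
        thus "cinner e w' *s e = cinner e w *s e"
          unfolding w'_def by (simp add: cinner_diff_right cinner_scale_right)
      qed
      finally have "w = cinner v w *s v + (\<Sum>e\<in>E'. cinner e w *s e)"
        unfolding w'_def by (simp add: algebra_simps)
      thus "w = (\<Sum>e\<in>insert v E'. cinner e w *s e)"
        using vE' E' unfolding eig_basis_def by (simp add: sum.insert)
    qed
    thus ?thesis by blast
  qed
qed

lemma spectral:
  fixes F :: "'n::finite cmat"
  assumes "psd F"
  shows "\<exists>E. eig_basis F UNIV E"
  using spectral_aux[of F UNIV] psd_herm[OF assms] by (simp add: subspace_UNIV)



lemma rank1_apply:
  "(\<chi> j k. \<Sum>e\<in>E. g e * e$j * cnj (e$k)) *v x = (\<Sum>e\<in>E. (g e * cinner e x) *s e)"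
proof -
  have "((\<chi> j k. \<Sum>e\<in>E. g e * e$j * cnj (e$k)) *v x) $ j = (\<Sum>e\<in>E. (g e * cinner e x) *s e) $ j" for j
    by (simp add: matrix_vector_mult_def cinner_def vector_scalar_mult_def sum_distrib_left
        sum_distrib_right mult_ac) (rule sum.swap)
  thus ?thesis by (simp add: vec_eq_iff)
qed

lemma sum_matvec: "(sum M S) *v x = (\<Sum>s\<in>S. M s *v (x::complex^'n::finite))"
  by (induction S rule: infinite_finite_induct) (auto simp: matrix_vector_mult_add_rdistrib)

lemma adjoint_adjoint[simp]: "adjoint_mat (adjoint_mat A) = A"
  by (simp add: adjoint_mat_def vec_eq_iff)

lemma cinner_adjoint2: "cinner x (adjoint_mat A *v y) = cinner (A *v x) y"
  using cinner_adjoint[of x "adjoint_mat A" y] by simp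

lemma bessel1:
  assumes "cinner e e = 1"
  shows "(cmod (cinner e y))^2 \<le> (norm y)^2"
proof -
  define c where "c = cinner e y"
  define r where "r = y - c *s e"
  have ye: "cinner y e = cnj c" unfolding c_def by (rule cinner_commute)
  have "cinner r r = cinner y y - c * cnj c"
    unfolding r_def using assms ye
    by (simp add: cinner_diff_left cinner_diff_right cinner_scale_left cinner_scale_right c_def[symmetric])
  moreover have "c * cnj c = of_real ((cmod c)^2)" by (rule complex_norm_square[symmetric])
  moreover have "Re (cinner y y) = (norm y)^2" by (rule Re_cinner_self)
  ultimately have "Re (cinner r r) = (norm y)^2 - (cmod c)^2"
    by simp
  moreover have "Re (cinner r r) \<ge> 0" by (simp add: Re_cinner_self)
  ultimately show ?thesis unfolding c_def by simp
qed

context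
  fixes F :: "'n::finite cmat" and E
  assumes EB: "eig_basis F UNIV E"
begin

lemma EB_fin: "finite E" using EB by (simp add: eig_basis_def)
lemma EB_exp: "x = (\<Sum>e\<in>E. cinner e x *s e)" using EB by (simp add: eig_basis_def)
lemma EB_orth: "e \<in> E \<Longrightarrow> f \<in> E \<Longrightarrow> cinner e f = (if e = f then 1 else 0)"
  using EB by (auto simp: eig_basis_def)
lemma EB_ev: "e \<in> E \<Longrightarrow> F *v e = complex_of_real (Re (cinner e (F *v e))) *s e"
  using EB by (auto simp: eig_basis_def)

lemma EB_coef: "f \<in> E \<Longrightarrow> cinner f (\<Sum>e\<in>E. c e *s e) = c f"
  using EB_fin by (simp add: cinner_sum_right cinner_scale_right EB_orth if_distrib
      sum.delta cong: if_cong)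

lemma EB_mateq: "(\<And>e. e \<in> E \<Longrightarrow> A *v e = B *v e) \<Longrightarrow> A = B"
proof -
  assume h: "\<And>e. e \<in> E \<Longrightarrow> A *v e = B *v e"
  have "A *v x = B *v x" for x
  proof -
    have ex: "(\<Sum>e\<in>E. cinner e x *s e) = x" by (rule EB_exp[symmetric])
    have "A *v (\<Sum>e\<in>E. cinner e x *s e) = B *v (\<Sum>e\<in>E. cinner e x *s e)"
      by (simp add: mat_sum mat_scale h)
    thus ?thesis by (simp only: ex)
  qed
  thus "A = B" by (simp add: matrix_eq)
qed

lemma EB_vec0: "(\<And>e. e \<in> E \<Longrightarrow> cinner e x = 0) \<Longrightarrow> x = 0"
  by (subst EB_exp) simp

lemma EB_trace: "mtrace A = (\<Sum>e\<in>E. cinner e (A *v e))"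
proof -
  have "A $ i $ i = (\<Sum>e\<in>E. cnj (e$i) * (A *v e) $ i)" for i
  proof -
    have "A $ i $ i = (A *v axis i 1) $ i"
      by (simp add: matrix_vector_mult_def axis_def if_distrib cong: if_cong)
    also have "axis i 1 = (\<Sum>e\<in>E. cnj (e$i) *s e)"
    proof -
      have "cinner e (axis i (1::complex)) = cnj (e$i)" for e
        by (simp add: cinner_def axis_def if_distrib cong: if_cong)
      thus ?thesis using EB_exp[of "axis i 1"] by simp
    qed
    finally show ?thesis by (simp add: mat_sum mat_scale)
  qed
  hence "mtrace A = (\<Sum>i\<in>UNIV. \<Sum>e\<in>E. cnj (e$i) * (A *v e) $ i)"
    by (simp add: mtrace_def)
  also have "\<dots> = (\<Sum>e\<in>E. cinner e (A *v e))"
    by (subst sum.swap) (simp add: cinner_def)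
  finally show ?thesis .
qed

end



context
  fixes F :: "'n::finite cmat" and E
  assumes EB: "eig_basis F UNIV E" and psdF: "psd F"
begin

definition lam where "lam e = Re (cinner e (F *v e))"
definition S0 :: "'n cmat" where
  "S0 = (\<chi> j k. \<Sum>e\<in>E. complex_of_real (sqrt (lam e)) * e$j * cnj (e$k))"

lemma lam_nonneg: "lam e \<ge> 0"
  unfolding lam_def using psd_Re_nonneg[OF psdF] by simp

lemma F_ev: "e \<in> E \<Longrightarrow> F *v e = complex_of_real (lam e) *s e"
  unfolding lam_def by (rule EB_ev[OF EB])

lemma S0_apply: "S0 *v x = (\<Sum>e\<in>E. (complex_of_real (sqrt (lam e)) * cinner e x) *s e)"
  unfolding S0_def by (rule rank1_apply)

lemma S0_coef: "f \<in> E \<Longrightarrow> cinner f (S0 *v x) = complex_of_real (sqrt (lam f)) * cinner f x"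
  unfolding S0_apply by (rule EB_coef[OF EB])

lemma S0_ev: "f \<in> E \<Longrightarrow> S0 *v f = complex_of_real (sqrt (lam f)) *s f"
proof -
  assume f: "f \<in> E"
  have "S0 *v f - complex_of_real (sqrt (lam f)) *s f = 0"
  proof (rule EB_vec0[OF EB])
    fix e assume e: "e \<in> E"
    show "cinner e (S0 *v f - complex_of_real (sqrt (lam f)) *s f) = 0"
      using e f by (simp add: cinner_diff_right S0_coef cinner_scale_right EB_orth[OF EB])
  qed
  thus ?thesis by simp
qed

lemma S0_quad: "cinner x (S0 *v x) = complex_of_real (\<Sum>e\<in>E. sqrt (lam e) * (cmod (cinner e x))^2)"
proof -
  have "cinner x (S0 *v x) = (\<Sum>e\<in>E. complex_of_real (sqrt (lam e)) * (cinner e x * cnj (cinner e x)))"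
    unfolding S0_apply
    by (simp add: cinner_sum_right cinner_scale_right cinner_commute[of x] mult_ac)
  also have "\<dots> = (\<Sum>e\<in>E. complex_of_real (sqrt (lam e) * (cmod (cinner e x))^2))"
    by (simp add: complex_norm_square[symmetric])
  finally show ?thesis by simp
qed

lemma S0_psd: "psd S0"
  unfolding psd_def quad_form_cinner S0_quad
  using lam_nonneg by (auto intro!: sum_nonneg)

lemma S0_sq: "S0 ** S0 = F"
proof (rule EB_mateq[OF EB])
  fix e assume e: "e \<in> E"
  have "(S0 ** S0) *v e = S0 *v (S0 *v e)" by (simp add: matrix_vector_mul_assoc)
  also have "\<dots> = complex_of_real (sqrt (lam e) * sqrt (lam e)) *s e"
    using e lam_nonneg[of e] by (simp add: S0_ev mat_scale vector_smult_assoc flip: of_real_mult)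
  also have "\<dots> = F *v e" using e lam_nonneg by (simp add: F_ev)
  finally show "(S0 ** S0) *v e = F *v e" .
qed

lemma S0_unique:
  assumes T: "psd T" "T ** T = F"
  shows "T = S0"
proof -
  have TT: "T *v (T *v y) = F *v y" for y
    using T(2) by (simp add: matrix_vector_mul_assoc)
  have TF: "T *v (F *v y) = F *v (T *v y)" for y
  proof -
    have "T *v (F *v y) = T *v (T *v (T *v y))" by (simp only: TT)
    also have "\<dots> = F *v (T *v y)" by (rule TT)
    finally show ?thesis .
  qed
  have comm: "T ** S0 = S0 ** T"
  proof (rule EB_mateq[OF EB])
    fix f assume f: "f \<in> E"
    let ?g = "T *v f"
    have "T *v (S0 *v f) - S0 *v (T *v f) = 0"
    proof (rule EB_vec0[OF EB])
      fix e assume e: "e \<in> E"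
      have "cinner e (T *v (F *v f)) = complex_of_real (lam f) * cinner e ?g"
        using f by (simp add: F_ev mat_scale cinner_scale_right)
      moreover have "cinner e (F *v ?g) = complex_of_real (lam e) * cinner e ?g"
        using psd_herm[OF psdF, of e ?g] e by (simp add: F_ev cinner_scale_left)
      ultimately have "complex_of_real (lam f) * cinner e ?g = complex_of_real (lam e) * cinner e ?g"
        using TF by metis
      hence "complex_of_real (sqrt (lam f)) * cinner e ?g = complex_of_real (sqrt (lam e)) * cinner e ?g"
        by (cases "cinner e ?g = 0") auto
      thus "cinner e (T *v (S0 *v f) - S0 *v (T *v f)) = 0"
        using e f by (simp add: cinner_diff_right S0_ev mat_scale cinner_scale_right S0_coef)
    qed
    thus "(T ** S0) *v f = (S0 ** T) *v f"
      by (simp add: matrix_vector_mul_assoc[symmetric])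
  qed
  have commv: "S0 *v (T *v z) = T *v (S0 *v z)" for z
    by (simp add: matrix_vector_mul_assoc comm)
  have S0S0: "S0 *v (S0 *v z) = F *v z" for z
    by (simp add: matrix_vector_mul_assoc S0_sq)
  have "S0 *v v = T *v v" for v
  proof -
    define w where "w = S0 *v v - T *v v"
    have hS: "cinner (S0 *v v) u = cinner v (S0 *v u)" for u using psd_herm[OF S0_psd] by simp
    have hT: "cinner (T *v v) u = cinner v (T *v u)" for u using psd_herm[OF T(1)] by simp
    have zero: "S0 *v (S0 *v w + T *v w) - T *v (S0 *v w + T *v w) = 0"
      by (simp add: matrix_vector_right_distrib S0S0 TT commv)
    have "cinner w (S0 *v w) + cinner w (T *v w) = cinner w (S0 *v w + T *v w)"
      by (simp add: cinner_add_right)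
    also have "\<dots> = cinner v (S0 *v (S0 *v w + T *v w) - T *v (S0 *v w + T *v w))"
      unfolding w_def by (simp add: cinner_diff_left cinner_diff_right hS hT)
    also have "\<dots> = 0" by (simp add: zero)
    finally have s: "cinner w (S0 *v w) + cinner w (T *v w) = 0" .
    have a: "Re (cinner w (S0 *v w)) \<ge> 0" "Re (cinner w (T *v w)) \<ge> 0"
      "Im (cinner w (S0 *v w)) = 0" "Im (cinner w (T *v w)) = 0"
      using psd_Re_nonneg[OF S0_psd] psd_Re_nonneg[OF T(1)] psd_Im[OF S0_psd] psd_Im[OF T(1)]
      by auto
    have "cinner w (S0 *v w) = 0" "cinner w (T *v w) = 0"
      using s a by (auto simp: complex_eq_iff)
    hence "S0 *v w = 0" "T *v w = 0"
      using psd_zero[OF S0_psd] psd_zero[OF T(1)] by auto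
    hence "cinner (S0 *v v - T *v v) w = 0"
      by (simp add: cinner_diff_left hS hT)
    hence "cinner w w = 0" by (simp only: w_def[symmetric])
    thus ?thesis unfolding w_def by (simp add: cinner_self_eq_0)
  qed
  thus "T = S0" by (simp add: matrix_eq)
qed

lemma psd_sqrt_eq: "psd_sqrt F = S0"
  unfolding psd_sqrt_def
proof (rule the_equality)
  show "psd S0 \<and> S0 ** S0 = F" using S0_psd S0_sq by blast
  fix T assume "psd T \<and> T ** T = F" thus "T = S0" using S0_unique by blast
qed

lemma trace_S0: "mtrace S0 = complex_of_real (\<Sum>e\<in>E. sqrt (lam e))"
proof -
  have "mtrace S0 = (\<Sum>e\<in>E. cinner e (S0 *v e))" by (rule EB_trace[OF EB])
  also have "\<dots> = (\<Sum>e\<in>E. complex_of_real (sqrt (lam e)))"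
  proof (rule sum.cong[OF refl])
    fix e assume e: "e \<in> E"
    show "cinner e (S0 *v e) = complex_of_real (sqrt (lam e))"
      using e by (simp add: S0_coef EB_orth[OF EB])
  qed
  finally show ?thesis by simp
qed

end


lemma L2_sum_triangle:
  "L2_set (\<lambda>i. \<Sum>e\<in>E. f i e) I \<le> (\<Sum>e\<in>E. L2_set (\<lambda>i. f i e) I)"
proof (induction E rule: infinite_finite_induct)
  case (insert x F)
  have "L2_set (\<lambda>i. \<Sum>e\<in>insert x F. f i e) I = L2_set (\<lambda>i. f i x + (\<Sum>e\<in>F. f i e)) I"
    using insert by simp
  also have "\<dots> \<le> L2_set (\<lambda>i. f i x) I + L2_set (\<lambda>i. \<Sum>e\<in>F. f i e) I"
    by (rule L2_set_triangle_ineq)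
  also have "\<dots> \<le> L2_set (\<lambda>i. f i x) I + (\<Sum>e\<in>F. L2_set (\<lambda>i. f i e) I)"
    using insert by simp
  finally show ?case using insert by simp
qed (simp_all add: L2_set_def)

lemma per_b:
  fixes F :: "'n::finite cmat" and I :: "'i set" and A :: "'i \<Rightarrow> 'n cmat"
  assumes psdF: "psd F" and fin: "finite I" and sumA: "(\<Sum>i\<in>I. adjoint_mat (A i) ** A i) = F"
  shows "(\<Sum>i\<in>I. (cmod (mtrace (A i)))^2) \<le> (cmod (mtrace (psd_sqrt F)))^2"
proof -
  obtain E where EB: "eig_basis F UNIV E" using spectral[OF psdF] by blast
  have finE: "finite E" by (rule EB_fin[OF EB])
  define a where "a i e = cinner e (A i *v e)" for i e
  define s where "s e = sqrt (lam F e)" for e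
  have trS: "cmod (mtrace (psd_sqrt F)) = (\<Sum>e\<in>E. s e)"
    unfolding psd_sqrt_eq[OF EB psdF] trace_S0[OF EB psdF] s_def
    by (subst norm_of_real) (simp add: sum_nonneg lam_nonneg[OF EB psdF])
  have trA: "mtrace (A i) = (\<Sum>e\<in>E. a i e)" for i
    unfolding a_def by (rule EB_trace[OF EB])
  have lamE: "lam F e = (\<Sum>i\<in>I. (norm (A i *v e))^2)" for e
  proof -
    have "cinner e (F *v e) = (\<Sum>i\<in>I. cinner e (adjoint_mat (A i) *v (A i *v e)))"
      unfolding sumA[symmetric] sum_matvec by (simp add: cinner_sum_right matrix_vector_mul_assoc)
    also have "\<dots> = (\<Sum>i\<in>I. cinner (A i *v e) (A i *v e))"
      by (simp add: cinner_adjoint2)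
    finally show ?thesis by (simp add: lam_def[OF EB psdF] Re_cinner_self)
  qed
  have ae: "L2_set (\<lambda>i. cmod (a i e)) I \<le> s e" if e: "e \<in> E" for e
  proof -
    have ee: "cinner e e = 1" using EB_orth[OF EB e e] by simp
    have "(\<Sum>i\<in>I. (cmod (a i e))^2) \<le> (\<Sum>i\<in>I. (norm (A i *v e))^2)"
      unfolding a_def by (intro sum_mono bessel1 ee)
    thus ?thesis unfolding L2_set_def s_def lamE by (rule real_sqrt_le_mono)
  qed
  have "L2_set (\<lambda>i. cmod (mtrace (A i))) I \<le> L2_set (\<lambda>i. \<Sum>e\<in>E. cmod (a i e)) I"
    unfolding trA by (rule L2_set_mono) (auto intro: norm_sum)
  also have "\<dots> \<le> (\<Sum>e\<in>E. L2_set (\<lambda>i. cmod (a i e)) I)" by (rule L2_sum_triangle)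
  also have "\<dots> \<le> (\<Sum>e\<in>E. s e)" by (rule sum_mono) (rule ae)
  finally have L: "L2_set (\<lambda>i. cmod (mtrace (A i))) I \<le> cmod (mtrace (psd_sqrt F))"
    unfolding trS .
  have "(\<Sum>i\<in>I. (cmod (mtrace (A i)))^2) = (L2_set (\<lambda>i. cmod (mtrace (A i))) I)^2"
    unfolding L2_set_def by (simp add: sum_nonneg)
  also have "\<dots> \<le> (cmod (mtrace (psd_sqrt F)))^2"
    using L by (intro power_mono) simp_all
  finally show ?thesis .
qed



lemma trace_mm: "mtrace (X ** (max_mixed :: 'n::finite cmat)) = mtrace X * (1 / of_nat CARD('n))"
  by (simp add: mtrace_def max_mixed_def matrix_matrix_mult_def mat_def sum_distrib_right
      if_distrib sum_divide_distrib cong: if_cong)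

theorem mainTheorem10:
  fixes B :: "'b set" and F :: "'b \<Rightarrow> 'n::finite cmat"
    and I :: "'b \<Rightarrow> 'i set" and A :: "'b \<Rightarrow> 'i \<Rightarrow> 'n cmat"
  assumes "is_povm B F"
    and "\<And>b. b \<in> B \<Longrightarrow> finite (I b)"
    and "\<And>b. b \<in> B \<Longrightarrow> (\<Sum>i\<in>I b. adjoint_mat (A b i) ** A b i) = F b"
  shows "ent_fid max_mixed (\<lambda>(b, i). A b i) (SIGMA b:B. I b)
           \<le> ent_fid max_mixed (\<lambda>b. psd_sqrt (F b)) B"
proof -
  define k where "k = (cmod (1 / of_nat CARD('n) :: complex))^2"
  have k0: "k \<ge> 0" unfolding k_def by simp
  have finB: "finite B" and psdB: "\<And>b. b \<in> B \<Longrightarrow> psd (F b)"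
    using assms(1) unfolding is_povm_def by auto
  have cm: "(cmod (mtrace (X ** (max_mixed :: 'n cmat))))^2 = (cmod (mtrace X))^2 * k" for X
    unfolding trace_mm k_def by (simp add: norm_divide power_divide)
  have "ent_fid max_mixed (\<lambda>(b, i). A b i) (SIGMA b:B. I b)
        = (\<Sum>(b,i)\<in>(SIGMA b:B. I b). (cmod (mtrace (A b i)))^2 * k)"
    unfolding ent_fid_def by (intro sum.cong refl) (auto simp: cm)
  also have "\<dots> = (\<Sum>b\<in>B. \<Sum>i\<in>I b. (cmod (mtrace (A b i)))^2 * k)"
    by (rule sum.Sigma[symmetric]) (use finB assms(2) in auto)
  also have "\<dots> = (\<Sum>b\<in>B. (\<Sum>i\<in>I b. (cmod (mtrace (A b i)))^2) * k)"
    by (simp add: sum_distrib_right)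
  also have "\<dots> \<le> (\<Sum>b\<in>B. (cmod (mtrace (psd_sqrt (F b))))^2 * k)"
    by (intro sum_mono mult_right_mono per_b psdB assms(2,3) k0)
  also have "\<dots> = ent_fid max_mixed (\<lambda>b. psd_sqrt (F b)) B"
    unfolding ent_fid_def by (simp add: cm)
  finally show ?thesis .
qed

end
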